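(* Let $P$ be a locally finite poset, $R$ a commutative unital ring and $n\ge 2$. For every integer $k\ge 0$, the submodule $J^n_k(P,R)$ is a (two-sided) ideal of $I^n(P,R)$.
   Context: For a poset $P$ and $n\ge 2$, $P^n_\le=\{(x_1,\dots,x_n)\in P^n: x_1\le\dots\le x_n\}$. For $\mathbf{x}=(x_1,\dots,x_n)\in P^n_\le$, $\mathcal{I}(\mathbf{x})=[x_1,x_2]\times\dots\times[x_{n-1},x_n]$, where $[a,b]=\{c\in P: a\le c\le b\}$. $I^n(P,R)$ is the $R$-module of functions $f:P^n_\le\to R$ with multiplication $(fg)(\mathbf{x})=\sum_{\mathbf{y}\in\mathcal{I}(\mathbf{x})}f(x_1,\mathbf{y})g(\mathbf{y},x_n)$. For $a\le b$, $l(a,b)$ is the length of the interval $[a,b]$, i.e. the maximum of $|C|-1$ over chains $C\subseteq[a,b]$. $J^n_k(P,R)=\{f\in I^n(P,R): f(x_1,\dots,x_n)=0 \text{ whenever } l(x_1,x_n)<k\}$. An ideal is an $R$-submodule $I$ with $I^n(P,R)\,I\subseteq I$ and $I\,I^n(P,R)\subseteq I$. *)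

theory Defs
  imports Main
begin

text \<open>Tuples (x_1,...,x_n) are represented as lists of length n.
  Elements of I^n(P,R) are represented by functions on all lists that vanish
  outside P^n_\<le> (canonical representatives).\<close>

definition locally_finite_order :: "'a::order itself \<Rightarrow> bool" where
  "locally_finite_order _ \<longleftrightarrow> (\<forall>a b::'a. finite {a..b})"

definition chains_le :: "nat \<Rightarrow> ('a::order) list set" where
  "chains_le n = {xs. length xs = n \<and> sorted_wrt (\<le>) xs}"

definition box :: "('a::order) list \<Rightarrow> 'a list set" where
  "box xs = {ys. length ys = length xs - 1 \<and>
      (\<forall>i < length xs - 1. xs ! i \<le> ys ! i \<and> ys ! i \<le> xs ! (Suc i))}"

definition incidence_space :: "nat \<Rightarrow> (('a::order) list \<Rightarrow> 'r::comm_ring_1) set" where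
  "incidence_space n = {f. \<forall>xs. xs \<notin> chains_le n \<longrightarrow> f xs = 0}"

definition inc_mult :: "nat \<Rightarrow> (('a::order) list \<Rightarrow> 'r::comm_ring_1) \<Rightarrow> ('a list \<Rightarrow> 'r) \<Rightarrow> 'a list \<Rightarrow> 'r" where
  "inc_mult n f g xs = (if xs \<in> chains_le n
     then (\<Sum>ys\<in>box xs. f (hd xs # ys) * g (ys @ [last xs])) else 0)"

definition interval_length :: "'a::order \<Rightarrow> 'a \<Rightarrow> nat" where
  "interval_length a b = Max {card C - 1 | C. C \<subseteq> {a..b} \<and> Complete_Partial_Order.chain (\<le>) C}"

definition J_ideal :: "nat \<Rightarrow> nat \<Rightarrow> (('a::order) list \<Rightarrow> 'r::comm_ring_1) set" where
  "J_ideal n k = {f \<in> incidence_space n.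
      \<forall>xs \<in> chains_le n. interval_length (hd xs) (last xs) < k \<longrightarrow> f xs = 0}"

definition is_inc_ideal :: "nat \<Rightarrow> (('a::order) list \<Rightarrow> 'r::comm_ring_1) set \<Rightarrow> bool" where
  "is_inc_ideal n I \<longleftrightarrow> I \<subseteq> incidence_space n \<and> (\<lambda>_. 0) \<in> I
     \<and> (\<forall>f\<in>I. \<forall>g\<in>I. (\<lambda>xs. f xs + g xs) \<in> I)
     \<and> (\<forall>r. \<forall>f\<in>I. (\<lambda>xs. r * f xs) \<in> I)
     \<and> (\<forall>f\<in>incidence_space n. \<forall>g\<in>I. inc_mult n f g \<in> I \<and> inc_mult n g f \<in> I)"

end

theory Submission
  imports Defs
begin

lemma il_mono:
  fixes a b c d :: "'a::order"
  assumes fin: "finite {a..b}" and sub: "{c..d} \<subseteq> {a..b}"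
  shows "interval_length c d \<le> interval_length a b"
proof -
  let ?S = "{card C - 1 | C. C \<subseteq> {a..b} \<and> Complete_Partial_Order.chain (\<le>) C}"
  let ?T = "{card C - 1 | C. C \<subseteq> {c..d} \<and> Complete_Partial_Order.chain (\<le>) C}"
  have "?S \<subseteq> (\<lambda>C. card C - 1) ` Pow {a..b}" by auto
  hence finS: "finite ?S" using fin by (meson finite_Pow_iff finite_imageI finite_subset)
  have TS: "?T \<subseteq> ?S" using sub by blast
  have "card ({}::'a set) - 1 \<in> ?T" by (auto intro!: exI[of _ "{}"] simp: chain_empty)
  hence ne: "?T \<noteq> {}" by blast
  show ?thesis unfolding interval_length_def
    using Max_mono[OF TS ne finS] .
qed

lemma mult_zero_left_side:
  fixes f g :: "('a::order) list \<Rightarrow> 'r::comm_ring_1"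
  assumes lf: "locally_finite_order TYPE('a)" and n: "n \<ge> 2"
    and g: "g \<in> J_ideal n k" and f: "f \<in> incidence_space n"
    and xs: "xs \<in> chains_le n" and il: "interval_length (hd xs) (last xs) < k"
  shows "inc_mult n f g xs = 0 \<and> inc_mult n g f xs = 0"
proof -
  have len: "length xs = n" using xs by (simp add: chains_le_def)
  have fin: "finite {hd xs..last xs}" using lf by (simp add: locally_finite_order_def)
  have ne: "xs \<noteq> []" using len n by auto
  have hdx: "hd xs = xs ! 0" using ne by (simp add: hd_conv_nth)
  have lastx: "last xs = xs ! (n - 1)" using len ne by (simp add: last_conv_nth)
  have t1: "g (ys @ [last xs]) = 0" if ys: "ys \<in> box xs" for ys
  proof (cases "ys @ [last xs] \<in> chains_le n")
    case False thus ?thesis using g by (auto simp: J_ideal_def incidence_space_def)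
  next
    case True
    have ly: "length ys = n - 1" using ys len by (simp add: box_def)
    have "xs ! 0 \<le> ys ! 0" using ys len n by (simp add: box_def)
    hence h: "hd xs \<le> hd (ys @ [last xs])" using ly n hdx by (simp add: hd_conv_nth nth_append)
    have "{hd (ys @ [last xs])..last (ys @ [last xs])} \<subseteq> {hd xs..last xs}"
      using h by auto
    hence "interval_length (hd (ys @ [last xs])) (last (ys @ [last xs])) < k"
      using il_mono[OF fin] il by (meson le_less_trans)
    thus ?thesis using g True by (auto simp: J_ideal_def)
  qed
  have t2: "g (hd xs # ys) = 0" if ys: "ys \<in> box xs" for ys
  proof (cases "hd xs # ys \<in> chains_le n")
    case False thus ?thesis using g by (auto simp: J_ideal_def incidence_space_def)
  next
    case True
    have ly: "length ys = n - 1" using ys len by (simp add: box_def)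
    have "ys ! (n - 2) \<le> xs ! (Suc (n - 2))" using ys len n by (simp add: box_def)
    moreover have "Suc (n - 2) = n - 1" using n by simp
    moreover have "ys \<noteq> []" using ly n by auto
    ultimately have h: "last (hd xs # ys) \<le> last xs" using ly n lastx
      by (simp add: last_conv_nth numeral_2_eq_2)
    have "{hd (hd xs # ys)..last (hd xs # ys)} \<subseteq> {hd xs..last xs}"
      using h by auto
    hence "interval_length (hd (hd xs # ys)) (last (hd xs # ys)) < k"
      using il_mono[OF fin] il by (meson le_less_trans)
    thus ?thesis using g True by (auto simp: J_ideal_def)
  qed
  show ?thesis using t1 t2 xs by (simp add: inc_mult_def)
qed

theorem lemma2p1:
  fixes n k :: nat
  assumes "locally_finite_order TYPE('a::order)"
    and "n \<ge> 2"
  shows "is_inc_ideal n (J_ideal n k :: ('a list \<Rightarrow> 'r::comm_ring_1) set)"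
proof -
  have closed: "inc_mult n f g \<in> J_ideal n k \<and> inc_mult n g f \<in> J_ideal n k"
    if f: "f \<in> incidence_space n" and g: "(g :: 'a list \<Rightarrow> 'r) \<in> J_ideal n k" for f g
    using mult_zero_left_side[OF assms g f]
    by (auto simp: J_ideal_def incidence_space_def inc_mult_def)
  show ?thesis unfolding is_inc_ideal_def
    using closed by (auto simp: J_ideal_def incidence_space_def)
qed

end
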